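(* Let $n\ge 3$ be an odd integer and let $P_n$ denote the set of odd primes $p$ with $3\le p\le n$. Let $\pi_{\mathrm{odd}}(n^2)=\pi(n^2)-1$ be the number of odd primes not exceeding $n^2$. Define $\mathrm{dup}=\sum_k \mathrm{dup}_n(k)$, the sum over odd integers $k$ with $1<k\le n^2$, and for $p\in P_n$, $B_p=\dfrac{(n^2-p)\bmod 2p+p}{2p}$. Then $$\pi_{\mathrm{odd}}(n^2)=\mathrm{dup}+\sum_{p\in P_n}B_p-\frac12-\frac{n^2}{2}\left(\sum_{p\in P_n}\frac1p-1\right).$$
   Context: For an integer $a$ and a positive integer $m$, $a \bmod m$ denotes the unique $r\in\{0,\dots,m-1\}$ with $a\equiv r\pmod m$. $\pi(x)$ is the number of primes $\le x$. For a positive integer $n$ and an odd integer $k$, let $m_n(k)$ be the number of distinct primes $p\le n$ dividing $k$, and define $\mathrm{dup}_n(k)=0$ if $m_n(k)=0$ and $\mathrm{dup}_n(k)=m_n(k)-1$ otherwise. *)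

theory Defs
  imports Complex_Main "HOL-Computational_Algebra.Primes"
begin

definition m_n :: "int \<Rightarrow> int \<Rightarrow> nat" where
  "m_n n k = card {p::int. prime p \<and> p \<le> n \<and> p dvd k}"

text \<open>dup_n(k) = 0 if m_n(k) = 0, else m_n(k) - 1 (nat subtraction realizes exactly this).\<close>
definition dup_n :: "int \<Rightarrow> int \<Rightarrow> nat" where
  "dup_n n k = (if m_n n k = 0 then 0 else m_n n k - 1)"

definition prime_pi :: "int \<Rightarrow> nat" where
  "prime_pi x = card {p::int. prime p \<and> p \<le> x}"

end

theory Submission
  imports Defs
begin

lemma mult_set_card:
  fixes N p :: int
  assumes p: "p \<ge> 3" "odd p" and N: "N \<ge> 0"
  shows "card {k. odd k \<and> 1 < k \<and> k \<le> N \<and> p dvd k} = nat ((N + p) div (2*p))"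
proof -
  define d where "d = (N + p) div (2*p)"
  define r where "r = (N + p) mod (2*p)"
  have dr: "N + p = 2*p*d + r" unfolding d_def r_def by simp
  have r0: "0 \<le> r" "r < 2*p" unfolding r_def using p by auto
  have key: "p*(2*j+1) \<le> N \<longleftrightarrow> j + 1 \<le> d" for j
  proof
    assume "p*(2*j+1) \<le> N"
    hence h: "2*p*(j+1) \<le> 2*p*d + r" using dr by (simp add: algebra_simps)
    show "j + 1 \<le> d"
    proof (rule ccontr)
      assume "\<not> j+1 \<le> d"
      hence "d + 1 \<le> j + 1" by simp
      hence "2*p*(d+1) \<le> 2*p*(j+1)" using p by (intro mult_left_mono) auto
      thus False using h r0 unfolding distrib_left by linarith
    qed
  next
    assume "j + 1 \<le> d"
    hence "2*p*(j+1) \<le> 2*p*d" using p by (intro mult_left_mono) auto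
    thus "p*(2*j+1) \<le> N" using dr r0 by (simp add: algebra_simps)
  qed
  have eq: "{k. odd k \<and> 1 < k \<and> k \<le> N \<and> p dvd k} = (\<lambda>j. p*(2*j+1)) ` {0..<d}"
  proof (intro set_eqI iffI)
    fix k assume "k \<in> {k. odd k \<and> 1 < k \<and> k \<le> N \<and> p dvd k}"
    hence k: "odd k" "1 < k" "k \<le> N" "p dvd k" by auto
    then obtain q where q: "k = p*q" by (auto elim: dvdE)
    have "odd q" using k(1) q by auto
    have "q > 0"
    proof (rule ccontr)
      assume "\<not> q > 0"
      hence "p*q \<le> 0" using p by (intro mult_nonneg_nonpos) auto
      thus False using k(2) q by simp
    qed
    from \<open>odd q\<close> obtain j where j: "q = 2*j+1" by (metis oddE)
    have "j \<ge> 0" using \<open>q>0\<close> j by simp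
    moreover have "j < d" using key[of j] k(3) q j by simp
    ultimately show "k \<in> (\<lambda>j. p*(2*j+1)) ` {0..<d}" using q j by auto
  next
    fix k assume "k \<in> (\<lambda>j. p*(2*j+1)) ` {0..<d}"
    then obtain j where j: "0 \<le> j" "j < d" "k = p*(2*j+1)" by auto
    have a1: "p * 1 \<le> p*(2*j+1)" using p j by (intro mult_left_mono) auto
    have "1 < k" using a1 p j(3) by linarith
    moreover have "p*(2*j+1) \<le> N" using key[of j] j by simp
    moreover have "odd (p*(2*j+1))" using p by simp
    ultimately show "k \<in> {k. odd k \<and> 1 < k \<and> k \<le> N \<and> p dvd k}"
      using j p by auto
  qed
  have inj: "inj_on (\<lambda>j. p*(2*j+1)) {0..<d}" using p by (auto simp: inj_on_def)
  show ?thesis unfolding eq card_image[OF inj] by (simp add: d_def)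
qed

lemma card_odd:
  fixes N :: int
  assumes "odd N" "N \<ge> 1"
  shows "real (card {k. odd k \<and> 1 < k \<and> k \<le> N}) = (real_of_int N - 1) / 2"
proof -
  obtain M where M: "N = 2*M+1" using assms(1) by (metis oddE)
  have eq: "{k. odd k \<and> 1 < k \<and> k \<le> N} = (\<lambda>j. 2*j+1) ` {1..M}"
  proof (intro set_eqI iffI)
    fix k assume "k \<in> {k. odd k \<and> 1 < k \<and> k \<le> N}"
    hence k: "odd k" "1 < k" "k \<le> N" by auto
    then obtain j where "k = 2*j+1" by (metis oddE)
    thus "k \<in> (\<lambda>j. 2*j+1) ` {1..M}" using k M by auto
  next
    fix k assume "k \<in> (\<lambda>j. 2*j+1) ` {1..M}"
    thus "k \<in> {k. odd k \<and> 1 < k \<and> k \<le> N}" using M by auto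
  qed
  have inj: "inj_on (\<lambda>j::int. 2*j+1) {1..M}" by (auto simp: inj_on_def)
  have "M \<ge> 0" using M assms by simp
  thus ?thesis unfolding eq card_image[OF inj] using M by simp
qed

lemma m_zero_iff:
  fixes n k :: int
  assumes n: "n \<ge> 0" and k: "1 < k" "k \<le> n^2"
  shows "m_n n k = 0 \<longleftrightarrow> prime k \<and> n < k"
proof -
  define S where "S = {p::int. prime p \<and> p \<le> n \<and> p dvd k}"
  have fin: "finite S" unfolding S_def by (rule finite_subset[of _ "{0..n}"]) (auto dest: prime_gt_0_int)
  have m: "m_n n k = card S" unfolding m_n_def S_def by simp
  show ?thesis
  proof
    assume "m_n n k = 0"
    hence S0: "S = {}" using fin m by simp
    have pk: "prime k"
    proof (rule ccontr)
      assume np: "\<not> prime k"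
      obtain p where p: "prime p" "p dvd k" using prime_factor_int[of k] k by auto
      then obtain q where q: "k = p*q" by (auto elim: dvdE)
      have p1: "p > 1" using p prime_gt_1_int by blast
      have q0: "q > 0"
      proof (rule ccontr)
        assume "\<not> q > 0"
        hence "p*q \<le> 0" using p1 by (intro mult_nonneg_nonpos) auto
        thus False using k q by simp
      qed
      have "q \<noteq> 1" using np p q by auto
      then obtain r where r: "prime r" "r dvd q" using prime_factor_int[of q] q0 by auto
      have rq: "r \<le> q" using r q0 by (simp add: zdvd_imp_le)
      have rk: "r dvd k" using r q by simp
      have r1: "r > 1" using r prime_gt_1_int by blast
      have "p \<le> n \<or> r \<le> n"
      proof (rule ccontr)
        assume "\<not> (p \<le> n \<or> r \<le> n)"
        hence "n < p" "n < r" by auto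
        hence "n*n < p*r" using n by (intro mult_strict_mono) auto
        also have "p*r \<le> p*q" using rq p1 by (intro mult_left_mono) auto
        finally show False using k q by (simp add: power2_eq_square)
      qed
      thus False using S0 p rk r unfolding S_def by auto
    qed
    moreover have "n < k"
    proof (rule ccontr)
      assume "\<not> n < k"
      hence "k \<in> S" using pk unfolding S_def by auto
      thus False using S0 by simp
    qed
    ultimately show "prime k \<and> n < k" by simp
  next
    assume a: "prime k \<and> n < k"
    have "S = {}"
    proof (rule ccontr)
      assume "S \<noteq> {}"
      then obtain p where p: "prime p" "p \<le> n" "p dvd k" unfolding S_def by auto
      have "p = k" using p a by (simp add: primes_dvd_imp_eq)
      thus False using p a by simp
    qed
    thus "m_n n k = 0" using m by simp
  qed
qed

theorem mainTheorem11:
  fixes n :: int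
  assumes "odd n" and "n \<ge> 3"
  defines "P \<equiv> {p::int. prime p \<and> odd p \<and> 3 \<le> p \<and> p \<le> n}"
  defines "dup \<equiv> (\<Sum>k\<in>{k::int. odd k \<and> 1 < k \<and> k \<le> n\<^sup>2}. dup_n n k)"
  defines "B \<equiv> (\<lambda>p::int. real_of_int ((n\<^sup>2 - p) mod (2*p) + p) / real_of_int (2*p))"
  shows "real (prime_pi (n\<^sup>2)) - 1 =
           real dup + (\<Sum>p\<in>P. B p) - 1/2
           - (real_of_int (n\<^sup>2) / 2) * ((\<Sum>p\<in>P. 1 / real_of_int p) - 1)"
proof -
  define N where "N = n^2"
  define K where "K = {k::int. odd k \<and> 1 < k \<and> k \<le> N}"
  define Z where "Z = {k\<in>K. m_n n k = 0}"
  have N9: "N \<ge> 9"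
  proof -
    have "3*3 \<le> n*n" using assms(2) by (intro mult_mono) auto
    thus "N \<ge> 9" by (simp add: N_def power2_eq_square)
  qed
  have nN: "n \<le> N" unfolding N_def using assms(2) by (simp add: power2_eq_square)
  have oddN: "odd N" unfolding N_def using assms(1) by simp
  have finK: "finite K" unfolding K_def by (rule finite_subset[of _ "{0..N}"]) auto
  have finP: "finite P" unfolding P_def by (rule finite_subset[of _ "{0..n}"]) auto
  have finZ: "finite Z" unfolding Z_def using finK by simp
  have Zeq: "Z = {k. prime k \<and> odd k \<and> n < k \<and> k \<le> N}"
  proof (intro set_eqI iffI)
    fix k assume "k \<in> Z"
    hence k: "odd k" "1 < k" "k \<le> N" "m_n n k = 0" unfolding Z_def K_def by auto
    thus "k \<in> {k. prime k \<and> odd k \<and> n < k \<and> k \<le> N}"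
      using m_zero_iff[of n k] assms(2) unfolding N_def by auto
  next
    fix k assume "k \<in> {k. prime k \<and> odd k \<and> n < k \<and> k \<le> N}"
    hence k: "prime k" "odd k" "n < k" "k \<le> N" by auto
    have "1 < k" using k(1) prime_gt_1_int by blast
    thus "k \<in> Z" using m_zero_iff[of n k] assms(2) k unfolding N_def Z_def K_def by auto
  qed
  have primes: "{p::int. prime p \<and> p \<le> N} = insert 2 (P \<union> Z)"
  proof (intro set_eqI iffI)
    fix p assume "p \<in> {p::int. prime p \<and> p \<le> N}"
    hence p: "prime p" "p \<le> N" by auto
    have "p > 1" using p(1) prime_gt_1_int by blast
    show "p \<in> insert 2 (P \<union> Z)"
    proof (cases "even p")
      case True
      hence "p = 2" using p(1) using primes_dvd_imp_eq[of 2 p] by auto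
      thus ?thesis by simp
    next
      case False
      hence "p \<ge> 3" using \<open>p > 1\<close> by presburger
      thus ?thesis using False p unfolding P_def Zeq by auto
    qed
  next
    fix p assume "p \<in> insert 2 (P \<union> Z)"
    thus "p \<in> {p::int. prime p \<and> p \<le> N}" using nN N9 unfolding P_def Zeq by auto
  qed
  have h1: "real (prime_pi N) = 1 + card P + card Z"
  proof -
    have "2 \<notin> P \<union> Z" unfolding P_def Zeq by auto
    moreover have "P \<inter> Z = {}" unfolding P_def Zeq by auto
    ultimately have "card (insert 2 (P \<union> Z)) = 1 + card P + card Z"
      using finP finZ by (simp add: card_Un_disjoint)
    thus ?thesis unfolding prime_pi_def primes by simp
  qed
  have dupK: "dup = (\<Sum>k\<in>K. dup_n n k)" unfolding dup_def K_def N_def by simp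
  have h2: "real dup = (\<Sum>k\<in>K. real (m_n n k)) - (real (card K) - real (card Z))"
  proof -
    have "real dup = (\<Sum>k\<in>K. real (m_n n k) - (if m_n n k = 0 then 0 else 1))"
      unfolding dupK of_nat_sum by (intro sum.cong) (auto simp: dup_n_def of_nat_diff)
    also have "\<dots> = (\<Sum>k\<in>K. real (m_n n k)) - (\<Sum>k\<in>K. (if m_n n k = 0 then 0 else 1))"
      by (simp add: sum_subtractf)
    also have "(\<Sum>k\<in>K. (if m_n n k = 0 then 0 else 1::real)) = real (card {k\<in>K. m_n n k \<noteq> 0})"
      using finK by (simp add: sum.If_cases Int_def Collect_neg_eq[symmetric] del: Collect_neg_eq)
    also have "{k\<in>K. m_n n k \<noteq> 0} = K - Z" unfolding Z_def by auto
    also have "real (card (K - Z)) = real (card K) - real (card Z)"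
      using finK by (simp add: Z_def card_Diff_subset of_nat_diff card_mono)
    finally show ?thesis .
  qed
  have h3: "(\<Sum>k\<in>K. real (m_n n k)) = (\<Sum>p\<in>P. real (nat ((N + p) div (2*p))))"
  proof -
    have mk: "m_n n k = card {p\<in>P. p dvd k}" if "k \<in> K" for k
    proof -
      have "{p::int. prime p \<and> p \<le> n \<and> p dvd k} = {p\<in>P. p dvd k}"
      proof (intro set_eqI iffI)
        fix p assume "p \<in> {p::int. prime p \<and> p \<le> n \<and> p dvd k}"
        hence p: "prime p" "p \<le> n" "p dvd k" by auto
        have "odd p" using p(3) that unfolding K_def by (auto dest: dvd_trans)
        moreover have "p > 1" using p(1) prime_gt_1_int by blast
        ultimately have "p \<ge> 3" by presburger
        thus "p \<in> {p\<in>P. p dvd k}" using p \<open>odd p\<close> unfolding P_def by auto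
      qed (auto simp: P_def)
      thus ?thesis unfolding m_n_def by simp
    qed
    have "(\<Sum>k\<in>K. real (m_n n k)) = (\<Sum>k\<in>K. \<Sum>p\<in>P. if p dvd k then 1 else 0)"
      using finP by (intro sum.cong) (auto simp: mk sum.If_cases Int_def)
    also have "\<dots> = (\<Sum>p\<in>P. \<Sum>k\<in>K. if p dvd k then 1 else 0)" by (rule sum.swap)
    also have "\<dots> = (\<Sum>p\<in>P. real (nat ((N + p) div (2*p))))"
    proof (intro sum.cong refl)
      fix p assume "p \<in> P"
      hence p: "p \<ge> 3" "odd p" unfolding P_def by auto
      have "(\<Sum>k\<in>K. if p dvd k then 1 else 0::real) = real (card {k\<in>K. p dvd k})"
        using finK by (simp add: sum.If_cases Int_def)
      also have "{k\<in>K. p dvd k} = {k. odd k \<and> 1 < k \<and> k \<le> N \<and> p dvd k}"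
        unfolding K_def by auto
      also have "card \<dots> = nat ((N + p) div (2*p))" using mult_set_card[OF p] N9 by simp
      finally show "(\<Sum>k\<in>K. if p dvd k then 1 else 0::real) = real (nat ((N + p) div (2*p)))" .
    qed
    finally show ?thesis .
  qed
  have h4: "real (nat ((N + p) div (2*p))) = real_of_int N / 2 * (1 / real_of_int p) + 1 - B p"
    if "p \<in> P" for p
  proof -
    have p: "p \<ge> 3" using that unfolding P_def by auto
    define d where "d = (N + p) div (2*p)"
    define r where "r = (N + p) mod (2*p)"
    have dr: "N + p = 2*p*d + r" unfolding d_def r_def by simp
    have d0: "d \<ge> 0" unfolding d_def using p N9 by (simp add: pos_imp_zdiv_nonneg_iff)
    have e: "N + p = (N - p) + 2*p" by simp
    have rr: "(N - p) mod (2*p) = r" unfolding r_def e mod_add_self2 ..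
    have Bp: "B p = (real_of_int r + p) / (2 * p)" unfolding B_def N_def[symmetric] rr by simp
    have drr: "real_of_int N + p = 2*p*real_of_int d + r" using arg_cong[OF dr, of real_of_int] by simp
    have "real (nat d) = real_of_int d" using d0 by simp
    moreover have "2*p*(real_of_int N + p) = 2*p*(2*p*real_of_int d + r)" using drr by simp
    ultimately show ?thesis unfolding d_def[symmetric] Bp using p
      by (simp add: field_simps)
  qed
  have h5: "real (card K) = (real_of_int N - 1) / 2" unfolding K_def using card_odd[OF oddN] N9 by simp
  have S: "(\<Sum>p\<in>P. real (nat ((N + p) div (2*p)))) =
      real_of_int N / 2 * (\<Sum>p\<in>P. 1 / real_of_int p) + real (card P) - (\<Sum>p\<in>P. B p)"
    by (simp add: h4 sum.distrib sum_subtractf sum_distrib_left)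
  show ?thesis unfolding N_def[symmetric] using h1 h2 h3 h5 S by (simp add: algebra_simps, linarith)
qed

end
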